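(* Let $k\ge2$ and $\tau\in\mathcal{S}_k$ with $\mathcal{J}(\tau)=\{0,1,\ldots,k\}$. Then there is a unique $\bar\tau\in\mathcal{S}_{k+3}$ with $\mathcal{J}(\bar\tau)=\{0,1,\ldots,k,k+2,k+3\}$ whose length-$k$ initial pattern equals $\tau$.
   Context: The pattern of a word of $j$ distinct letters is its order-preserving relabeling by $\{1,\ldots,j\}$; the length-$j$ initial pattern of $\sigma$ is the pattern of $\sigma_1\ldots\sigma_j$. The $j$-set $\mathcal{J}(\sigma)$ of $\sigma\in\mathcal{S}_m$ is the set consisting of $0$ together with all $j\in\{1,\ldots,m\}$ such that the length-$j$ initial pattern of $\sigma$ is an involution in $\mathcal{S}_j$. *)

theory Defs
  imports "HOL-Combinatorics.Permutations"
begin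

text \<open>A permutation in S_m is a function nat => nat that permutes {1..m}
  (identity outside).\<close>

definition init_pattern :: "(nat \<Rightarrow> nat) \<Rightarrow> nat \<Rightarrow> nat \<Rightarrow> nat" where
  "init_pattern \<sigma> j = (\<lambda>i. if i \<in> {1..j} then card {l \<in> {1..j}. \<sigma> l \<le> \<sigma> i} else i)"

definition is_involution :: "nat \<Rightarrow> (nat \<Rightarrow> nat) \<Rightarrow> bool" where
  "is_involution j p \<longleftrightarrow> p permutes {1..j} \<and> p \<circ> p = id"

definition jset :: "nat \<Rightarrow> (nat \<Rightarrow> nat) \<Rightarrow> nat set" where
  "jset m \<sigma> = {0} \<union> {j \<in> {1..m}. is_involution j (init_pattern \<sigma> j)}"

end

theory Submission
  imports Defs
begin

lemma ip_le_iff: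
  assumes inj: "inj_on \<sigma> {1..j}" and l: "l \<in> {1..j}" and i: "i \<in> {1..j}"
  shows "init_pattern \<sigma> j l \<le> init_pattern \<sigma> j i \<longleftrightarrow> \<sigma> l \<le> \<sigma> i"
proof
  assume "\<sigma> l \<le> \<sigma> i"
  then have "{x \<in> {1..j}. \<sigma> x \<le> \<sigma> l} \<subseteq> {x \<in> {1..j}. \<sigma> x \<le> \<sigma> i}" by auto
  then show "init_pattern \<sigma> j l \<le> init_pattern \<sigma> j i"
    using l i unfolding init_pattern_def by (simp add: card_mono)
next
  assume h: "init_pattern \<sigma> j l \<le> init_pattern \<sigma> j i"
  show "\<sigma> l \<le> \<sigma> i"
  proof (rule ccontr)
    assume "\<not> \<sigma> l \<le> \<sigma> i"
    then have "{x \<in> {1..j}. \<sigma> x \<le> \<sigma> i} \<subset> {x \<in> {1..j}. \<sigma> x \<le> \<sigma> l}" using l by auto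
    then have "card {x \<in> {1..j}. \<sigma> x \<le> \<sigma> i} < card {x \<in> {1..j}. \<sigma> x \<le> \<sigma> l}"
      by (simp add: psubset_card_mono)
    then show False using h l i unfolding init_pattern_def by simp
  qed
qed

lemma ip_permutes:
  assumes inj: "inj_on \<sigma> {1..j}"
  shows "init_pattern \<sigma> j permutes {1..j}"
proof (rule inj_imp_permutes)
  show "inj_on (init_pattern \<sigma> j) {1..j}"
  proof (rule inj_onI)
    fix x y assume x: "x \<in> {1..j}" and y: "y \<in> {1..j}" and e: "init_pattern \<sigma> j x = init_pattern \<sigma> j y"
    have a: "\<sigma> x \<le> \<sigma> y" using ip_le_iff[OF inj x y] e by (metis order_refl)
    have b: "\<sigma> y \<le> \<sigma> x" using ip_le_iff[OF inj y x] e by (metis order_refl)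
    from a b have "\<sigma> x = \<sigma> y" by (rule antisym)
    then show "x = y" using inj_onD[OF inj _ x y] by simp
  qed
  show "finite {1..j}" by simp
  fix x assume x: "x \<in> {1..j}"
  have "card {l \<in> {1..j}. \<sigma> l \<le> \<sigma> x} \<le> card {1..j}" by (rule card_mono) auto
  moreover have "card {l \<in> {1..j}. \<sigma> l \<le> \<sigma> x} > 0" using x by (subst card_gt_0_iff) auto
  ultimately show "init_pattern \<sigma> j x \<in> {1..j}" using x unfolding init_pattern_def by simp
next
  fix x :: nat assume "x \<notin> {1..j}" then show "init_pattern \<sigma> j x = x" unfolding init_pattern_def by auto
qed

lemma ip_in: "i \<in> {1..j} \<Longrightarrow> init_pattern f j i = card {l \<in> {1..j}. f l \<le> f i}"
  by (simp add: init_pattern_def)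

lemma ip_out: "i \<notin> {1..j} \<Longrightarrow> init_pattern f j i = i"
  by (auto simp add: init_pattern_def)

lemma ip_self:
  assumes p: "\<sigma> permutes {1..n}"
  shows "init_pattern \<sigma> n = \<sigma>"
proof
  fix i
  show "init_pattern \<sigma> n i = \<sigma> i"
  proof (cases "i \<in> {1..n}")
    case True
    have inj: "inj_on \<sigma> {l \<in> {1..n}. \<sigma> l \<le> \<sigma> i}" by (rule permutes_inj_on[OF p])
    have "\<sigma> ` {l \<in> {1..n}. \<sigma> l \<le> \<sigma> i} = {1..\<sigma> i}"
    proof -
      have "\<sigma> ` {l \<in> {1..n}. \<sigma> l \<le> \<sigma> i} = {y \<in> \<sigma> ` {1..n}. y \<le> \<sigma> i}" by auto
      also have "\<dots> = {y \<in> {1..n}. y \<le> \<sigma> i}" using permutes_image[OF p] by simp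
      also have "\<dots> = {1..\<sigma> i}" using permutes_in_image[OF p, of i] True by auto
      finally show ?thesis .
    qed
    then have "card {l \<in> {1..n}. \<sigma> l \<le> \<sigma> i} = \<sigma> i" using card_image[OF inj] by simp
    then show ?thesis using ip_in[OF True] by simp
  next
    case False then show ?thesis using permutes_not_in[OF p False] ip_out[OF False] by simp
  qed
qed

lemma ip_comp:
  assumes inj: "inj_on \<sigma> {1..m}" and jm: "j \<le> m"
  shows "init_pattern (init_pattern \<sigma> m) j = init_pattern \<sigma> j"
proof
  fix i
  show "init_pattern (init_pattern \<sigma> m) j i = init_pattern \<sigma> j i"
  proof (cases "i \<in> {1..j}")
    case True
    have im: "i \<in> {1..m}" using True jm by auto
    have "{l \<in> {1..j}. init_pattern \<sigma> m l \<le> init_pattern \<sigma> m i} = {l \<in> {1..j}. \<sigma> l \<le> \<sigma> i}"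
    proof (rule Collect_cong)
      fix l
      show "(l \<in> {1..j} \<and> init_pattern \<sigma> m l \<le> init_pattern \<sigma> m i) = (l \<in> {1..j} \<and> \<sigma> l \<le> \<sigma> i)"
      proof (cases "l \<in> {1..j}")
        case True
        then have "l \<in> {1..m}" using jm by auto
        have "init_pattern \<sigma> m l \<le> init_pattern \<sigma> m i \<longleftrightarrow> \<sigma> l \<le> \<sigma> i"
          by (rule ip_le_iff[OF inj \<open>l \<in> {1..m}\<close> im])
        then show ?thesis using True by simp
      next
        case False then show ?thesis by blast
      qed
    qed
    then have "card {l \<in> {1..j}. init_pattern \<sigma> m l \<le> init_pattern \<sigma> m i} = card {l \<in> {1..j}. \<sigma> l \<le> \<sigma> i}"
      by (rule arg_cong)
    then show ?thesis using ip_in[OF True, of "init_pattern \<sigma> m"] ip_in[OF True, of \<sigma>] by simp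
  next
    case False then show ?thesis using ip_out[OF False, of "init_pattern \<sigma> m"] ip_out[OF False, of \<sigma>] by simp
  qed
qed

definition ins :: "(nat \<Rightarrow> nat) \<Rightarrow> nat \<Rightarrow> nat \<Rightarrow> nat \<Rightarrow> nat" where
  "ins q v n = (\<lambda>i. if i \<in> {1..n} then (if v \<le> q i then Suc (q i) else q i) else if i = Suc n then v else i)"

lemma ins_in: "i \<in> {1..n} \<Longrightarrow> ins q v n i = (if v \<le> q i then Suc (q i) else q i)"
  by (simp add: ins_def)
lemma ins_last: "ins q v n (Suc n) = v"
  by (simp add: ins_def)
lemma ins_out: "i \<notin> {1..Suc n} \<Longrightarrow> ins q v n i = i"
  by (auto simp add: ins_def)

lemma INS:
  assumes p: "\<sigma> permutes {1..Suc n}"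
  shows "\<sigma> = ins (init_pattern \<sigma> n) (\<sigma> (Suc n)) n"
proof
  fix i
  show "\<sigma> i = ins (init_pattern \<sigma> n) (\<sigma> (Suc n)) n i"
  proof (cases "i \<in> {1..n}")
    case True
    have "\<sigma> i = card {l \<in> {1..Suc n}. \<sigma> l \<le> \<sigma> i}"
      using fun_cong[OF ip_self[OF p], of i] True unfolding init_pattern_def by simp
    also have "{l \<in> {1..Suc n}. \<sigma> l \<le> \<sigma> i} = {l \<in> {1..n}. \<sigma> l \<le> \<sigma> i} \<union> (if \<sigma> (Suc n) \<le> \<sigma> i then {Suc n} else {})"
      by (auto simp: le_Suc_eq)
    also have "card \<dots> = init_pattern \<sigma> n i + (if \<sigma> (Suc n) \<le> \<sigma> i then 1 else 0)"
      using True unfolding init_pattern_def by auto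
    finally have e: "\<sigma> i = init_pattern \<sigma> n i + (if \<sigma> (Suc n) \<le> \<sigma> i then 1 else 0)" .
    have sn: "Suc n \<noteq> i" using True by auto
    have ne: "\<sigma> (Suc n) \<noteq> \<sigma> i" using injD[OF permutes_inj[OF p]] sn by blast
    show ?thesis using e ne True by (auto simp: ins_in split: if_splits)
  next
    case False
    then show ?thesis using permutes_not_in[OF p] by (auto simp: ins_def)
  qed
qed

lemma ins_permutes:
  assumes q: "q permutes {1..n}" and v: "v \<in> {1..Suc n}"
  shows "ins q v n permutes {1..Suc n}"
proof (rule inj_imp_permutes)
  have qi: "\<And>i. i \<in> {1..n} \<Longrightarrow> q i \<in> {1..n}" using permutes_in_image[OF q] by blast
  have qinj: "inj q" using permutes_inj[OF q] .
  show "inj_on (ins q v n) {1..Suc n}"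
  proof (rule inj_onI)
    fix x y assume x: "x \<in> {1..Suc n}" and y: "y \<in> {1..Suc n}" and e: "ins q v n x = ins q v n y"
    have sh: "\<And>a. a \<in> {1..n} \<Longrightarrow> ins q v n a \<noteq> v"
    proof -
      fix a assume a: "a \<in> {1..n}"
      show "ins q v n a \<noteq> v" unfolding ins_in[OF a] by simp
    qed
    show "x = y"
    proof (cases "x = Suc n")
      case True
      show ?thesis
      proof (cases "y = Suc n")
        case True then show ?thesis using \<open>x = Suc n\<close> by simp
      next
        case False
        then have y': "y \<in> {1..n}" using y by auto
        have "ins q v n y = v" using e True ins_last[of q v n] by simp
        then show ?thesis using sh[OF y'] by simp
      qed
    next
      case False
      then have x': "x \<in> {1..n}" using x by auto
      show ?thesis
      proof (cases "y = Suc n")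
        case True
        have "ins q v n x = v" using e True ins_last[of q v n] by simp
        then show ?thesis using sh[OF x'] by simp
      next
        case False
        then have y': "y \<in> {1..n}" using y by auto
        have "(if v \<le> q x then Suc (q x) else q x) = (if v \<le> q y then Suc (q y) else q y)"
          using e unfolding ins_in[OF x'] ins_in[OF y'] .
        then have "q x = q y" by (auto split: if_splits)
        then show ?thesis by (rule injD[OF qinj])
      qed
    qed
  qed
  show "finite {1..Suc n}" by simp
  fix x assume "x \<in> {1..Suc n}"
  then consider "x \<in> {1..n}" | "x = Suc n" by fastforce
  then show "ins q v n x \<in> {1..Suc n}"
  proof cases
    case 1 then show ?thesis using qi[OF 1] unfolding ins_in[OF 1] by auto
  next
    case 2 then show ?thesis using v ins_last[of q v n] by simp
  qed
next
  fix x :: nat assume "x \<notin> {1..Suc n}" then show "ins q v n x = x" by (rule ins_out)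
qed

lemma ins_pattern:
  assumes q: "q permutes {1..n}" and v: "v \<in> {1..Suc n}"
  shows "init_pattern (ins q v n) n = q"
proof
  fix i
  let ?s = "ins q v n"
  have sp: "?s permutes {1..Suc n}" by (rule ins_permutes[OF q v])
  have e: "?s = ins (init_pattern ?s n) v n" using INS[OF sp] by (simp add: ins_last)
  have pp: "init_pattern ?s n permutes {1..n}"
    by (rule ip_permutes) (meson permutes_inj_on sp)
  show "init_pattern ?s n i = q i"
  proof (cases "i \<in> {1..n}")
    case True
    have "ins q v n i = ins (init_pattern ?s n) v n i" using fun_cong[OF e, of i] .
    then show ?thesis using True by (auto simp: ins_in split: if_splits)
  next
    case False then show ?thesis using permutes_not_in[OF q False] permutes_not_in[OF pp False] by simp
  qed
qed

lemma inv_iff: "is_involution n f \<longleftrightarrow> f permutes {1..n} \<and> (\<forall>i. f (f i) = i)"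
  by (auto simp: is_involution_def fun_eq_iff)

lemma rev_lemma:
  "\<sigma> permutes {1..n} \<Longrightarrow> (\<forall>j\<in>{1..n}. is_involution j (init_pattern \<sigma> j)) \<Longrightarrow> \<sigma> n \<le> i \<Longrightarrow> i \<le> n
   \<Longrightarrow> \<sigma> i + i = \<sigma> n + n"
proof (induction n arbitrary: \<sigma> i)
  case 0 then show ?case using permutes_not_in[OF "0.prems"(1)] by auto
next
  case (Suc n)
  let ?p = "init_pattern \<sigma> n"
  define v where "v = \<sigma> (Suc n)"
  have inj: "inj_on \<sigma> {1..n}" using permutes_inj_on[OF Suc.prems(1)] .
  have pp: "?p permutes {1..n}" by (rule ip_permutes[OF inj])
  have pj: "\<forall>j\<in>{1..n}. is_involution j (init_pattern ?p j)" using Suc.prems(2) ip_comp[OF inj] by auto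
  have IH: "\<And>i. ?p n \<le> i \<Longrightarrow> i \<le> n \<Longrightarrow> ?p i + i = ?p n + n" using Suc.IH[OF pp pj] by blast
  have se: "\<sigma> = ins ?p v n" using INS[OF Suc.prems(1)] v_def by simp
  have "is_involution (Suc n) (init_pattern \<sigma> (Suc n))" using Suc.prems(2) by auto
  then have sinv: "\<And>x. \<sigma> (\<sigma> x) = x" using ip_self[OF Suc.prems(1)] by (simp add: inv_iff)
  have v: "v \<in> {1..Suc n}" using permutes_in_image[OF Suc.prems(1)] v_def by auto
  show ?case
  proof (cases "v = Suc n")
    case True
    have "i = Suc n" using Suc.prems(3,4) True v_def by simp
    then show ?thesis by simp
  next
    case False
    then have vn: "v \<in> {1..n}" using v by auto
    have "\<sigma> v = Suc n" using sinv v_def by metis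
    then have "ins ?p v n v = Suc n" using fun_cong[OF se, of v] by simp
    moreover have "?p v \<in> {1..n}" using permutes_in_image[OF pp] vn by auto
    ultimately have pv: "?p v = n" using vn by (auto simp: ins_in split: if_splits)
    have "is_involution n ?p" using Suc.prems(2) vn by auto
    then have "?p (?p v) = v" by (auto simp: inv_iff)
    then have pn: "?p n = v" using pv by simp
    show ?thesis
    proof (cases "i = Suc n")
      case True then show ?thesis using v_def by simp
    next
      case False
      then have i: "v \<le> i" "i \<le> n" using Suc.prems(3,4) v_def by auto
      have e: "?p i + i = v + n" using IH[of i] pn i by simp
      have i1: "i \<in> {1..n}" using i vn by auto
      have vle: "v \<le> ?p i" using e i by linarith
      have "\<sigma> i = ins ?p v n i" using fun_cong[OF se, of i] .
      also have "\<dots> = Suc (?p i)" using ins_in[OF i1, where q="?p" and v=v] vle by simp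
      finally have "\<sigma> i = Suc (?p i)" .
      then show ?thesis using e v_def by linarith
    qed
  qed
qed

theorem mainTheorem12:
  fixes k :: nat and \<tau> :: "nat \<Rightarrow> nat"
  assumes "k \<ge> 2" and "\<tau> permutes {1..k}" and "jset k \<tau> = {0..k}"
  shows "\<exists>!\<tau>b. \<tau>b permutes {1..k+3} \<and> jset (k+3) \<tau>b = {0..k} \<union> {k+2, k+3}
              \<and> init_pattern \<tau>b k = \<tau>"
proof -
  have k2: "2 \<le> k" by fact
  have tp: "\<tau> permutes {1..k}" by fact
  have Tall: "\<forall>j\<in>{1..k}. is_involution j (init_pattern \<tau> j)"
  proof
    fix j assume j: "j \<in> {1..k}"
    then have "j \<in> jset k \<tau>" using assms(3) by auto
    then show "is_involution j (init_pattern \<tau> j)" using j unfolding jset_def by auto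
  qed
  have "is_involution k (init_pattern \<tau> k)" using Tall k2 by auto
  then have tinv: "\<And>i. \<tau> (\<tau> i) = i" using ip_self[OF tp] by (simp add: inv_iff)
  have timg: "\<And>i. i \<in> {1..k} \<Longrightarrow> \<tau> i \<in> {1..k}" using permutes_in_image[OF tp] by blast
  have tout: "\<And>i. i \<notin> {1..k} \<Longrightarrow> \<tau> i = i" using permutes_not_in[OF tp] by blast
  have tinj: "\<And>i j. \<tau> i = \<tau> j \<Longrightarrow> i = j" using tinv by metis
  define c where "c = \<tau> k"
  have c1: "1 \<le> c" "c \<le> k" using timg[of k] k2 c_def by auto
  have tc: "\<tau> c = k" using tinv c_def by simp
  have R: "\<And>i. c \<le> i \<Longrightarrow> i \<le> k \<Longrightarrow> \<tau> i + i = c + k"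
    unfolding c_def by (rule rev_lemma[OF tp Tall])
  have low: "\<And>i. i < c \<Longrightarrow> \<tau> i < c"
  proof (rule ccontr)
    fix i assume i: "i < c" and n: "\<not> \<tau> i < c"
    have "i \<le> k" using i c1 by simp
    show False
    proof (cases "i = 0")
      case True then show False using tout[of 0] n c1 by simp
    next
      case False
      then have "\<tau> i \<le> k" using timg[of i] \<open>i \<le> k\<close> by auto
      then have "\<tau> (\<tau> i) + \<tau> i = c + k" using R n by simp
      then show False using tinv[of i] i \<open>\<tau> i \<le> k\<close> by simp
    qed
  qed
  have mid: "\<And>i. c < i \<Longrightarrow> i \<le> k \<Longrightarrow> c \<le> \<tau> i \<and> \<tau> i < k"
  proof -
    fix i assume i: "c < i" "i \<le> k"
    have "\<tau> i + i = c + k" using R i by simp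
    then show "c \<le> \<tau> i \<and> \<tau> i < k" using i by simp
  qed
  define d where "d = \<tau> (k - 1)"
  have dk: "c = k \<Longrightarrow> 1 \<le> d \<and> d \<le> k - 1"
  proof -
    assume ck: "c = k"
    have "\<tau> (k-1) \<in> {1..k}" using timg[of "k-1"] k2 by simp
    moreover have "\<tau> (k-1) \<noteq> k" using tinj[of "k-1" k] c_def ck k2 by auto
    ultimately show ?thesis using d_def by auto
  qed
  have td: "\<tau> d = k - 1" using tinv d_def by simp
  have R2: "\<And>i. c = k \<Longrightarrow> d \<le> i \<Longrightarrow> i \<le> k - 1 \<Longrightarrow> \<tau> i + i = d + (k - 1)"
  proof -
    fix i assume ck: "c = k" and i: "d \<le> i" "i \<le> k - 1"
    let ?p = "init_pattern \<tau> (k-1)"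
    have tp': "\<tau> permutes {1..Suc (k-1)}" using tp k2 by simp
    have inj: "inj_on \<tau> {1..k-1}" using permutes_inj_on[OF tp] .
    have pp: "?p permutes {1..k-1}" by (rule ip_permutes[OF inj])
    have pj: "\<forall>j\<in>{1..k-1}. is_involution j (init_pattern ?p j)" using Tall ip_comp[OF inj] by auto
    have te: "\<tau> = ins ?p k (k-1)" using INS[OF tp'] k2 c_def ck by simp
    have pe: "\<And>j. j \<in> {1..k-1} \<Longrightarrow> ?p j = \<tau> j"
    proof -
      fix j assume j: "j \<in> {1..k-1}"
      have "?p j \<in> {1..k-1}" using permutes_in_image[OF pp] j by blast
      moreover have "\<tau> j = ins ?p k (k-1) j" using fun_cong[OF te, of j] .
      ultimately show "?p j = \<tau> j" using j by (auto simp: ins_in)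
    qed
    have d1: "1 \<le> d" "d \<le> k - 1" using dk ck by auto
    have "?p (k-1) = d" using pe[of "k-1"] d_def k2 by simp
    then have "?p i + i = d + (k - 1)" using rev_lemma[OF pp pj, of i] i by simp
    then show "\<tau> i + i = d + (k - 1)" using pe[of i] i d1 by simp
  qed
  have low2: "\<And>i. c = k \<Longrightarrow> i < d \<Longrightarrow> \<tau> i < d"
  proof (rule ccontr)
    fix i assume ck: "c = k" and i: "i < d" and n: "\<not> \<tau> i < d"
    have d1: "1 \<le> d" "d \<le> k - 1" using dk ck by auto
    show False
    proof (cases "i = 0")
      case True then show False using tout[of 0] n d1 by simp
    next
      case False
      then have "\<tau> i \<in> {1..k}" using timg[of i] i d1 by auto
      moreover have "\<tau> i \<noteq> k" using tinj[of i k] c_def ck i d1 by auto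
      ultimately have "\<tau> i \<le> k - 1" by auto
      then have "\<tau> (\<tau> i) + \<tau> i = d + (k-1)" using R2 n ck by simp
      then show False using tinv[of i] i d1 \<open>\<tau> i \<le> k - 1\<close> by simp
    qed
  qed
  have mid2: "\<And>i. c = k \<Longrightarrow> d < i \<Longrightarrow> i \<le> k - 1 \<Longrightarrow> d \<le> \<tau> i \<and> \<tau> i < k - 1"
  proof -
    fix i assume ck: "c = k" and i: "d < i" "i \<le> k - 1"
    have "\<tau> i + i = d + (k - 1)" using R2 ck i by simp
    then show "d \<le> \<tau> i \<and> \<tau> i < k - 1" using i k2 by arith
  qed
  define u0 where "u0 = (if c < k then k else d)"
  define q0 where "q0 = ins \<tau> u0 k"
  define r0 where "r0 = ins q0 c (Suc k)"
  define \<rho>0 where "\<rho>0 = ins r0 (Suc (Suc (Suc k))) (Suc (Suc k))"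
  have u0r: "u0 \<in> {1..Suc k}" using u0_def dk c1 by auto
  have q0p: "q0 permutes {1..Suc k}" unfolding q0_def by (rule ins_permutes[OF tp u0r])
  have r0p: "r0 permutes {1..Suc (Suc k)}" unfolding r0_def by (rule ins_permutes[OF q0p]) (use c1 in auto)
  have p0p: "\<rho>0 permutes {1..Suc (Suc (Suc k))}" unfolding \<rho>0_def by (rule ins_permutes[OF r0p]) auto
  have q0k: "\<And>i. i \<in> {1..k} \<Longrightarrow> q0 i = (if u0 \<le> \<tau> i then Suc (\<tau> i) else \<tau> i)"
    unfolding q0_def by (rule ins_in)
  have q0l: "q0 (Suc k) = u0" unfolding q0_def by (rule ins_last)
  have r0k: "\<And>i. i \<in> {1..Suc k} \<Longrightarrow> r0 i = (if c \<le> q0 i then Suc (q0 i) else q0 i)"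
    unfolding r0_def by (rule ins_in)
  have r0l: "r0 (Suc (Suc k)) = c" unfolding r0_def by (rule ins_last)
  have r0o: "\<And>i. i \<notin> {1..Suc (Suc k)} \<Longrightarrow> r0 i = i" using permutes_not_in[OF r0p] by blast
  have r0A: "\<And>i. c < k \<Longrightarrow> r0 i = (if i < c then \<tau> i else if i = c then Suc (Suc k) else if i \<le> k then Suc (\<tau> i)
      else if i = Suc k then Suc k else if i = Suc (Suc k) then c else i)"
  proof -
    fix i assume ck: "c < k"
    have u: "u0 = k" using ck u0_def by simp
    consider "i = 0" | "i \<in> {1..k}" | "i = Suc k" | "i = Suc (Suc k)" | "i > Suc (Suc k)" by force
    then show "?thesis i"
    proof cases
      case 1 then show ?thesis using r0o tout[of 0] c1 by simp
    next
      case 2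
      have i1: "i \<in> {1..Suc k}" using 2 by auto
      have tk: "\<tau> i \<le> k" using timg[OF 2] by auto
      consider "i < c" | "i = c" | "c < i" by force
      then show ?thesis
      proof cases
        case 1
        have l: "\<tau> i < c" by (rule low[OF 1])
        have "q0 i = \<tau> i" using q0k[OF 2] u l ck by simp
        then have "r0 i = \<tau> i" using r0k[OF i1] l by simp
        then show ?thesis using 1 by simp
      next
        case 2
        have "q0 i = Suc k" using q0k[OF \<open>i \<in> {1..k}\<close>] u 2 tc by simp
        then have "r0 i = Suc (Suc k)" using r0k[OF i1] c1 by simp
        then show ?thesis using 2 by simp
      next
        case 3
        have m: "c \<le> \<tau> i" "\<tau> i < k" using mid[OF 3] \<open>i \<in> {1..k}\<close> by auto
        have "q0 i = \<tau> i" using q0k[OF \<open>i \<in> {1..k}\<close>] u m by simp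
        then have "r0 i = Suc (\<tau> i)" using r0k[OF i1] m by simp
        then show ?thesis using 3 \<open>i \<in> {1..k}\<close> by simp
      qed
    next
      case 3 then show ?thesis using r0k[of i] q0l u ck by auto
    next
      case 4 then show ?thesis using r0l c1 by auto
    next
      case 5 then show ?thesis using r0o c1 by auto
    qed
  qed
  have r0B: "\<And>i. c = k \<Longrightarrow> r0 i = (if i < d then \<tau> i else if i = d then Suc k else if i < k then Suc (\<tau> i)
      else if i = k then Suc (Suc k) else if i = Suc k then d else if i = Suc (Suc k) then k else i)"
  proof -
    fix i assume ck: "c = k"
    have u: "u0 = d" using ck u0_def by simp
    have d1: "1 \<le> d" "d \<le> k - 1" using dk ck by auto
    consider "i = 0" | "i \<in> {1..k}" | "i = Suc k" | "i = Suc (Suc k)" | "i > Suc (Suc k)" by force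
    then show "?thesis i"
    proof cases
      case 1 then show ?thesis using r0o tout[of 0] d1 by simp
    next
      case 2
      have i1: "i \<in> {1..Suc k}" using 2 by auto
      have ik: "i \<in> {1..k}" by fact
      have tk: "\<tau> i \<le> k" using timg[OF 2] by auto
      consider "i < d" | "i = d" | "d < i \<and> i < k" | "i = k" using ik by force
      then show ?thesis
      proof cases
        case 1
        have l: "\<tau> i < d" by (rule low2[OF ck 1])
        have "q0 i = \<tau> i" using q0k[OF ik] u l by simp
        then have "r0 i = \<tau> i" using r0k[OF i1] l d1 ck by simp
        then show ?thesis using 1 by simp
      next
        case 2
        have "q0 i = k" using q0k[OF ik] u 2 td d1 k2 by simp
        then have "r0 i = Suc k" using r0k[OF i1] ck by simp
        then show ?thesis using 2 by simp
      next
        case 3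
        have m: "d \<le> \<tau> i" "\<tau> i < k - 1" using mid2[OF ck] 3 by auto
        have "q0 i = Suc (\<tau> i)" using q0k[OF ik] u m by simp
        then have "r0 i = Suc (\<tau> i)" using r0k[OF i1] m ck by simp
        then show ?thesis using 3 by simp
      next
        case 4
        have tkk: "\<tau> k = k" using c_def ck by simp
        have "q0 i = Suc k" using q0k[OF ik] u 4 tkk d1 by simp
        then have "r0 i = Suc (Suc k)" using r0k[OF i1] ck by simp
        moreover have "k \<noteq> d" "\<not> k < d" using d1 k2 by auto
        ultimately show ?thesis using 4 by simp
      qed
    next
      case 3 then show ?thesis using r0k[of i] q0l u ck d1 by auto
    next
      case 4 then show ?thesis using r0l ck d1 by auto
    next
      case 5 then show ?thesis using r0o d1 by auto
    qed
  qed
  have r0invA: "\<And>i. c < k \<Longrightarrow> r0 (r0 i) = i"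
  proof -
    fix i assume ck: "c < k"
    note A = r0A[OF ck]
    consider "i < c" | "i = c" | "c < i \<and> i \<le> k" | "i = Suc k" | "i = Suc (Suc k)" | "i > Suc (Suc k)" by force
    then show "r0 (r0 i) = i"
    proof cases
      case 1
      have a: "r0 i = \<tau> i" using A[of i] 1 by simp
      have b: "r0 (\<tau> i) = \<tau> (\<tau> i)" using A[of "\<tau> i"] low[OF 1] by simp
      show ?thesis using a b tinv by simp
    next
      case 2
      have a: "r0 i = Suc (Suc k)" using A[of i] 2 by simp
      have b: "r0 (Suc (Suc k)) = c" using A[of "Suc (Suc k)"] ck by simp
      show ?thesis using a b 2 by simp
    next
      case 3
      then have m: "c \<le> \<tau> i" "\<tau> i < k" using mid[of i] by auto
      have e1: "\<tau> i + i = c + k" using R[of i] 3 by simp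
      have e2: "\<tau> (Suc (\<tau> i)) + Suc (\<tau> i) = c + k" using R[of "Suc (\<tau> i)"] m by simp
      have a: "r0 i = Suc (\<tau> i)" using A[of i] 3 by simp
      have b: "r0 (Suc (\<tau> i)) = Suc (\<tau> (Suc (\<tau> i)))" using A[of "Suc (\<tau> i)"] m by simp
      have "Suc (\<tau> (Suc (\<tau> i))) = i" using e1 e2 3 by linarith
      then show ?thesis using a b by simp
    next
      case 4
      have a: "r0 i = Suc k" using A[of i] 4 c1 ck by simp
      show ?thesis using a 4 by simp
    next
      case 5
      have a: "r0 i = c" using A[of i] 5 c1 ck by simp
      have b: "r0 c = Suc (Suc k)" using A[of c] by simp
      show ?thesis using a b 5 by simp
    next
      case 6
      have a: "r0 i = i" using A[of i] 6 c1 ck by simp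
      show ?thesis using a a by simp
    qed
  qed
  have r0invB: "\<And>i. c = k \<Longrightarrow> r0 (r0 i) = i"
  proof -
    fix i assume ck: "c = k"
    note B = r0B[OF ck]
    have d1: "1 \<le> d" "d \<le> k - 1" using dk ck by auto
    have dlt: "d < k" using d1 k2 by arith
    consider "i < d" | "i = d" | "d < i \<and> i < k" | "i = k" | "i = Suc k" | "i = Suc (Suc k)" | "i > Suc (Suc k)" by force
    then show "r0 (r0 i) = i"
    proof cases
      case 1
      have a: "r0 i = \<tau> i" using B[of i] 1 by simp
      have b: "r0 (\<tau> i) = \<tau> (\<tau> i)" using B[of "\<tau> i"] low2[OF ck 1] by simp
      show ?thesis using a b tinv by simp
    next
      case 2
      have a: "r0 i = Suc k" using B[of i] 2 by simp
      have b: "r0 (Suc k) = d" using B[of "Suc k"] d1 dlt by simp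
      show ?thesis using a b 2 by simp
    next
      case 3
      then have m: "d \<le> \<tau> i" "\<tau> i < k - 1" using mid2[OF ck, of i] by auto
      have i': "d \<le> i" "i \<le> k - 1" using 3 by auto
      have e1: "\<tau> i + i = d + (k - 1)" by (rule R2[OF ck i'(1) i'(2)])
      have s': "d \<le> Suc (\<tau> i)" "Suc (\<tau> i) \<le> k - 1" using m by auto
      have e2: "\<tau> (Suc (\<tau> i)) + Suc (\<tau> i) = d + (k - 1)" by (rule R2[OF ck s'(1) s'(2)])
      have a: "r0 i = Suc (\<tau> i)" using B[of i] 3 by simp
      have s1: "Suc (\<tau> i) < k" "\<not> Suc (\<tau> i) < d" "Suc (\<tau> i) \<noteq> d" using m by arith+
      have b: "r0 (Suc (\<tau> i)) = Suc (\<tau> (Suc (\<tau> i)))" using B[of "Suc (\<tau> i)"] s1 by simp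
      have "Suc (\<tau> (Suc (\<tau> i))) = i" using e1 e2 3 by linarith
      then show ?thesis using a b by simp
    next
      case 4
      have a: "r0 i = Suc (Suc k)" using B[of i] 4 d1 dlt by simp
      have b: "r0 (Suc (Suc k)) = k" using B[of "Suc (Suc k)"] d1 dlt by simp
      show ?thesis using a b 4 by simp
    next
      case 5
      have a: "r0 i = d" using B[of i] 5 d1 dlt by simp
      have b: "r0 d = Suc k" using B[of d] d1 dlt by simp
      show ?thesis using a b 5 by simp
    next
      case 6
      have a: "r0 i = k" using B[of i] 6 d1 dlt by simp
      have b: "r0 k = Suc (Suc k)" using B[of k] d1 dlt by simp
      show ?thesis using a b 6 by simp
    next
      case 7
      have a: "r0 i = i" using B[of i] 7 d1 dlt k2 by simp
      show ?thesis using a a by simp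
    qed
  qed
  have r0inv: "\<And>i. r0 (r0 i) = i" using r0invA r0invB c1 by (cases "c < k") auto
  have q0ni: "\<not> (\<forall>i. q0 (q0 i) = i)"
  proof
    assume h: "\<forall>i. q0 (q0 i) = i"
    show False
    proof (cases "c < k")
      case True
      then have "q0 (Suc k) = k" "q0 k = c" using q0l q0k[of k] u0_def c_def k2 by auto
      then have "q0 (q0 (Suc k)) = c" by simp
      then show False using h c1 by simp
    next
      case False
      then have ck: "c = k" using c1 by simp
      have d1: "1 \<le> d" "d \<le> k - 1" using dk ck by auto
      have "q0 (Suc k) = d" "q0 d = k" using q0l q0k[of d] u0_def ck td d1 k2 by auto
      then have "q0 (q0 (Suc k)) = k" by simp
      then show False using h by simp
    qed
  qed
  have p0r: "\<rho>0 = r0"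
  proof
    fix i
    show "\<rho>0 i = r0 i"
    proof (cases "i \<in> {1..Suc (Suc k)}")
      case True
      then have "r0 i \<in> {1..Suc (Suc k)}" using permutes_in_image[OF r0p] by blast
      then show ?thesis unfolding \<rho>0_def using ins_in[OF True] by simp
    next
      case False
      then show ?thesis unfolding \<rho>0_def using r0o[OF False] by (auto simp: ins_def)
    qed
  qed
  have r0pat: "init_pattern r0 (Suc k) = q0" unfolding r0_def by (rule ins_pattern[OF q0p]) (use c1 in auto)
  have q0pat: "init_pattern q0 k = \<tau>" unfolding q0_def by (rule ins_pattern[OF tp u0r])
  have p0pat2: "init_pattern \<rho>0 (Suc (Suc k)) = r0" unfolding \<rho>0_def by (rule ins_pattern[OF r0p]) auto
  have Jchar: "\<And>\<rho>. \<rho> permutes {1..Suc (Suc (Suc k))} \<Longrightarrow> init_pattern \<rho> k = \<tau> \<Longrightarrow>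
      jset (Suc (Suc (Suc k))) \<rho> = {0..k} \<union> {Suc (Suc k), Suc (Suc (Suc k))} \<longleftrightarrow>
      (\<not> is_involution (Suc k) (init_pattern \<rho> (Suc k)) \<and> is_involution (Suc (Suc k)) (init_pattern \<rho> (Suc (Suc k)))
       \<and> is_involution (Suc (Suc (Suc k))) (init_pattern \<rho> (Suc (Suc (Suc k)))))"
  proof -
    fix \<rho> assume \<rho>p: "\<rho> permutes {1..Suc (Suc (Suc k))}" and pk: "init_pattern \<rho> k = \<tau>"
    have inj: "inj_on \<rho> {1..k}" by (rule permutes_inj_on[OF \<rho>p])
    have pj: "\<And>j. j \<le> k \<Longrightarrow> init_pattern \<rho> j = init_pattern \<tau> j"
    proof -
      fix j assume j: "j \<le> k"
      have "init_pattern (init_pattern \<rho> k) j = init_pattern \<rho> j" by (rule ip_comp[OF inj j])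
      then show "init_pattern \<rho> j = init_pattern \<tau> j" using pk by simp
    qed
    let ?J = "jset (Suc (Suc (Suc k))) \<rho>"
    have Jm: "\<And>x. x \<in> ?J \<longleftrightarrow> x = 0 \<or> (x \<in> {1..Suc (Suc (Suc k))} \<and> is_involution x (init_pattern \<rho> x))"
      unfolding jset_def by blast
    show "?J = {0..k} \<union> {Suc (Suc k), Suc (Suc (Suc k))} \<longleftrightarrow>
      (\<not> is_involution (Suc k) (init_pattern \<rho> (Suc k)) \<and> is_involution (Suc (Suc k)) (init_pattern \<rho> (Suc (Suc k)))
       \<and> is_involution (Suc (Suc (Suc k))) (init_pattern \<rho> (Suc (Suc (Suc k)))))" (is "_ \<longleftrightarrow> ?A \<and> ?B \<and> ?C")
    proof
      assume e: "?J = {0..k} \<union> {Suc (Suc k), Suc (Suc (Suc k))}"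
      have "Suc k \<notin> ?J" using e by simp
      then have a: ?A using Jm[of "Suc k"] by simp
      have "Suc (Suc k) \<in> ?J" using e by simp
      then have b: ?B using Jm[of "Suc (Suc k)"] by simp
      have "Suc (Suc (Suc k)) \<in> ?J" using e by simp
      then have c: ?C using Jm[of "Suc (Suc (Suc k))"] by simp
      show "?A \<and> ?B \<and> ?C" using a b c by blast
    next
      assume h: "?A \<and> ?B \<and> ?C"
      show "?J = {0..k} \<union> {Suc (Suc k), Suc (Suc (Suc k))}"
      proof (rule set_eqI)
        fix x
        consider "x = 0" | "x \<in> {1..k}" | "x = Suc k" | "x = Suc (Suc k)" | "x = Suc (Suc (Suc k))" | "x > Suc (Suc (Suc k))"
          by force
        then show "x \<in> ?J \<longleftrightarrow> x \<in> {0..k} \<union> {Suc (Suc k), Suc (Suc (Suc k))}"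
        proof cases
          case 1 then show ?thesis using Jm[of x] by simp
        next
          case 2
          have "is_involution x (init_pattern \<rho> x)" using pj[of x] Tall 2 by auto
          then show ?thesis using Jm[of x] 2 by auto
        next
          case 3 then show ?thesis using Jm[of x] h by simp
        next
          case 4 then show ?thesis using Jm[of x] h by simp
        next
          case 5 then show ?thesis using Jm[of x] h by simp
        next
          case 6 then show ?thesis using Jm[of x] by simp
        qed
      qed
    qed
  qed
  have p0inj2: "inj_on \<rho>0 {1..Suc (Suc k)}" by (rule permutes_inj_on[OF p0p])
  have p0inj1: "inj_on \<rho>0 {1..Suc k}" by (rule permutes_inj_on[OF p0p])
  have p0pat1: "init_pattern \<rho>0 (Suc k) = q0"
  proof -
    have "init_pattern (init_pattern \<rho>0 (Suc (Suc k))) (Suc k) = init_pattern \<rho>0 (Suc k)"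
      by (rule ip_comp[OF p0inj2]) simp
    then show ?thesis using p0pat2 r0pat by simp
  qed
  have p0patk: "init_pattern \<rho>0 k = \<tau>"
  proof -
    have "init_pattern (init_pattern \<rho>0 (Suc k)) k = init_pattern \<rho>0 k"
      by (rule ip_comp[OF p0inj1]) simp
    then show ?thesis using p0pat1 q0pat by simp
  qed
  have p0J: "jset (Suc (Suc (Suc k))) \<rho>0 = {0..k} \<union> {Suc (Suc k), Suc (Suc (Suc k))}"
  proof -
    have a: "\<not> is_involution (Suc k) (init_pattern \<rho>0 (Suc k))" using q0ni p0pat1 by (simp add: inv_iff)
    have b: "is_involution (Suc (Suc k)) (init_pattern \<rho>0 (Suc (Suc k)))" using r0inv r0p p0pat2 by (simp add: inv_iff)
    have c: "is_involution (Suc (Suc (Suc k))) (init_pattern \<rho>0 (Suc (Suc (Suc k))))"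
      using r0inv p0p ip_self[OF p0p] p0r by (simp add: inv_iff)
    show ?thesis using Jchar[OF p0p p0patk] a b c by blast
  qed
  have uniq: "\<And>\<rho>. \<rho> permutes {1..Suc (Suc (Suc k))} \<Longrightarrow>
      jset (Suc (Suc (Suc k))) \<rho> = {0..k} \<union> {Suc (Suc k), Suc (Suc (Suc k))} \<Longrightarrow> init_pattern \<rho> k = \<tau> \<Longrightarrow> \<rho> = \<rho>0"
  proof -
    fix \<rho> assume \<rho>p: "\<rho> permutes {1..Suc (Suc (Suc k))}"
      and J: "jset (Suc (Suc (Suc k))) \<rho> = {0..k} \<union> {Suc (Suc k), Suc (Suc (Suc k))}"
      and pk: "init_pattern \<rho> k = \<tau>"
    have ch: "\<not> is_involution (Suc k) (init_pattern \<rho> (Suc k))" "is_involution (Suc (Suc k)) (init_pattern \<rho> (Suc (Suc k)))"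
      "is_involution (Suc (Suc (Suc k))) (init_pattern \<rho> (Suc (Suc (Suc k))))"
      using Jchar[OF \<rho>p pk] J by blast+
    define r where "r = init_pattern \<rho> (Suc (Suc k))"
    define q where "q = init_pattern \<rho> (Suc k)"
    define x where "x = \<rho> (Suc (Suc (Suc k)))"
    define w where "w = r (Suc (Suc k))"
    define u where "u = q (Suc k)"
    have inj2: "inj_on \<rho> {1..Suc (Suc k)}" by (rule permutes_inj_on[OF \<rho>p])
    have inj1: "inj_on \<rho> {1..Suc k}" by (rule permutes_inj_on[OF \<rho>p])
    have rp: "r permutes {1..Suc (Suc k)}" unfolding r_def by (rule ip_permutes[OF inj2])
    have qp: "q permutes {1..Suc k}" unfolding q_def by (rule ip_permutes[OF inj1])
    have hr: "init_pattern r (Suc k) = q" unfolding r_def q_def by (rule ip_comp[OF inj2]) simp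
    have hq: "init_pattern q k = \<tau>"
    proof -
      have "init_pattern (init_pattern \<rho> (Suc k)) k = init_pattern \<rho> k" by (rule ip_comp[OF inj1]) simp
      then show ?thesis using pk q_def by simp
    qed
    have e\<rho>: "\<rho> = ins r x (Suc (Suc k))" unfolding r_def x_def by (rule INS[OF \<rho>p])
    have er: "r = ins q w (Suc k)"
    proof -
      have "r = ins (init_pattern r (Suc k)) (r (Suc (Suc k))) (Suc k)" by (rule INS[OF rp])
      then show ?thesis unfolding hr w_def[symmetric] .
    qed
    have eq: "q = ins \<tau> u k"
    proof -
      have "q = ins (init_pattern q k) (q (Suc k)) k" by (rule INS[OF qp])
      then show ?thesis unfolding hq u_def[symmetric] .
    qed
    have \<rho>inv: "\<And>i. \<rho> (\<rho> i) = i" using ch(3) ip_self[OF \<rho>p] by (simp add: inv_iff)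
    have rinv: "\<And>i. r (r i) = i" using ch(2) r_def by (simp add: inv_iff)
    have qni: "\<not> (\<forall>i. q (q i) = i)" using ch(1) qp q_def by (simp add: inv_iff)
    have xr: "x \<in> {1..Suc (Suc (Suc k))}" using permutes_in_image[OF \<rho>p] x_def by simp
    have wr: "w \<in> {1..Suc (Suc k)}" using permutes_in_image[OF rp] w_def by simp
    have ur: "u \<in> {1..Suc k}" using permutes_in_image[OF qp] u_def by simp
    have qimg: "\<And>i. i \<in> {1..Suc k} \<Longrightarrow> q i \<in> {1..Suc k}" using permutes_in_image[OF qp] by blast
    have qout: "\<And>i. i \<notin> {1..Suc k} \<Longrightarrow> q i = i" using permutes_not_in[OF qp] by blast
    have rimg: "\<And>i. i \<in> {1..Suc (Suc k)} \<Longrightarrow> r i \<in> {1..Suc (Suc k)}" using permutes_in_image[OF rp] by blast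
    have qk: "\<And>i. i \<in> {1..k} \<Longrightarrow> q i = (if u \<le> \<tau> i then Suc (\<tau> i) else \<tau> i)"
    proof -
      fix i assume i: "i \<in> {1..k}"
      have "q i = ins \<tau> u k i" using fun_cong[OF eq, of i] .
      then show "q i = (if u \<le> \<tau> i then Suc (\<tau> i) else \<tau> i)" using ins_in[OF i, of \<tau> u] by simp
    qed
    have rk: "\<And>i. i \<in> {1..Suc k} \<Longrightarrow> r i = (if w \<le> q i then Suc (q i) else q i)"
    proof -
      fix i assume i: "i \<in> {1..Suc k}"
      have "r i = ins q w (Suc k) i" using fun_cong[OF er, of i] .
      then show "r i = (if w \<le> q i then Suc (q i) else q i)" using ins_in[OF i, of q w] by simp
    qed
    have \<rho>k: "\<And>i. i \<in> {1..Suc (Suc k)} \<Longrightarrow> \<rho> i = (if x \<le> r i then Suc (r i) else r i)"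
    proof -
      fix i assume i: "i \<in> {1..Suc (Suc k)}"
      have "\<rho> i = ins r x (Suc (Suc k)) i" using fun_cong[OF e\<rho>, of i] .
      then show "\<rho> i = (if x \<le> r i then Suc (r i) else r i)" using ins_in[OF i, of r x] by simp
    qed
    have rl: "r (Suc (Suc k)) = w" using w_def by simp
    have ql: "q (Suc k) = u" using u_def by simp
    have w1: "w \<noteq> Suc (Suc k)"
    proof
      assume wK: "w = Suc (Suc k)"
      have "\<forall>i. q (q i) = i"
      proof
        fix i
        show "q (q i) = i"
        proof (cases "i \<in> {1..Suc k}")
          case True
          have qi: "q i \<in> {1..Suc k}" by (rule qimg[OF True])
          have qqi: "q (q i) \<in> {1..Suc k}" by (rule qimg[OF qi])
          have "r i = q i" using rk[OF True] wK qi by auto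
          moreover have "r (q i) = q (q i)" using rk[OF qi] wK qqi by auto
          ultimately show ?thesis using rinv[of i] by simp
        next
          case False then show ?thesis using qout by simp
        qed
      qed
      with qni show False by blast
    qed
    have wS: "w \<in> {1..Suc k}" using wr w1 by auto
    have rw: "r w = Suc (Suc k)" using rinv[of "Suc (Suc k)"] rl by simp
    have qw: "q w = Suc k"
    proof -
      have a: "q w \<in> {1..Suc k}" by (rule qimg[OF wS])
      have "(if w \<le> q w then Suc (q w) else q w) = Suc (Suc k)" using rk[OF wS] rw by simp
      then show ?thesis using a by (auto split: if_splits)
    qed
    have w2: "w \<noteq> Suc k"
    proof
      assume wk: "w = Suc k"
      then have uk: "u = Suc k" using qw ql by simp
      have "\<forall>i. q (q i) = i"
      proof
        fix i
        consider "i \<in> {1..k}" | "i = Suc k" | "i \<notin> {1..Suc k}" by force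
        then show "q (q i) = i"
        proof cases
          case 1
          have ti: "\<tau> i \<in> {1..k}" by (rule timg[OF 1])
          have a: "q i = \<tau> i" using qk[OF 1] uk ti by auto
          have b: "q (\<tau> i) = \<tau> (\<tau> i)" using qk[OF ti] uk timg[OF ti] by auto
          show ?thesis using a b tinv by simp
        next
          case 2 then show ?thesis using ql uk by simp
        next
          case 3 then show ?thesis using qout by simp
        qed
      qed
      with qni show False by blast
    qed
    have wk: "w \<in> {1..k}" using wS w2 by auto
    have twk: "\<tau> w = k" and uk: "u \<le> k"
    proof -
      have a: "\<tau> w \<in> {1..k}" by (rule timg[OF wk])
      have "(if u \<le> \<tau> w then Suc (\<tau> w) else \<tau> w) = Suc k" using qk[OF wk] qw by simp
      then show "\<tau> w = k" "u \<le> k" using a by (auto split: if_splits)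
    qed
    have wc: "w = c" using tinv[of w] twk c_def by simp
    have rc: "r c = Suc (Suc k)" using rw wc by simp
    define u' where "u' = r (Suc k)"
    have u'e: "u' = (if c \<le> u then Suc u else u)" using rk[of "Suc k"] ql wc u'_def by simp
    have ru': "r u' = Suc k" using rinv[of "Suc k"] u'_def by simp
    have U: "u = u0 \<and> u' = (if c < k then Suc k else d)"
    proof (cases "u' = Suc k")
      case True
      then have uk': "u = k" using u'e uk by (auto split: if_splits)
      have ck: "c < k"
      proof (rule ccontr)
        assume "\<not> c < k"
        then have ck: "c = k" using c1 by simp
        have tkk: "\<tau> k = k" using c_def ck by simp
        have "\<forall>i. q (q i) = i"
        proof
          fix i
          consider "i \<in> {1..k} \<and> i \<noteq> k" | "i = k" | "i = Suc k" | "i \<notin> {1..Suc k}" by force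
          then show "q (q i) = i"
          proof cases
            case 1
            then have i1: "i \<in> {1..k}" by simp
            have ti: "\<tau> i \<in> {1..k}" by (rule timg[OF i1])
            have tik: "\<tau> i \<noteq> k" using tinj[of i k] tkk 1 by auto
            have a: "q i = \<tau> i" using qk[OF i1] uk' ti tik by auto
            have b: "q (\<tau> i) = \<tau> (\<tau> i)" using qk[OF ti] uk' tinv[of i] 1 by auto
            show ?thesis using a b tinv by simp
          next
            case 2
            have a: "q k = Suc k" using qk[of k] k2 uk' tkk by simp
            show ?thesis using a ql uk' 2 by simp
          next
            case 3
            have a: "q k = Suc k" using qk[of k] k2 uk' tkk by simp
            show ?thesis using a ql uk' 3 by simp
          next
            case 4 then show ?thesis using qout by simp
          qed
        qed
        with qni show False by blast
      qed
      then show ?thesis using uk' True u0_def by simp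
    next
      case False
      have u'k: "u' \<le> k" using False u'e uk by (auto split: if_splits)
      have u'1: "1 \<le> u'" using u'e ur by (auto split: if_splits)
      have u'c: "u' \<noteq> c" using ru' rc by auto
      have u'K: "u' \<in> {1..k}" using u'k u'1 by simp
      have u'S: "u' \<in> {1..Suc k}" using u'k u'1 by simp
      have tu: "\<tau> u' \<in> {1..k}" by (rule timg[OF u'K])
      have tuk: "\<tau> u' \<noteq> k" using tinj[of u' c] tc u'c by auto
      have r1: "(if c \<le> q u' then Suc (q u') else q u') = Suc k" using rk[OF u'S] ru' wc by simp
      have q1: "q u' = (if u \<le> \<tau> u' then Suc (\<tau> u') else \<tau> u')" by (rule qk[OF u'K])
      have tu1: "\<tau> u' = k - 1" and uk1: "u \<le> k - 1"
        using r1 q1 tu tuk by (auto split: if_splits)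
      have u'd: "u' = d" using tinv[of u'] tu1 d_def by simp
      show ?thesis
      proof (cases "c < k")
        case True
        have "\<tau> (k - 1) + (k - 1) = c + k" using R[of "k - 1"] True by simp
        then have tk1: "\<tau> (k - 1) = Suc c" using k2 by simp
        then have u'sc: "u' = Suc c" using u'd d_def by simp
        then have uc: "u = c" using u'e by (auto split: if_splits)
        have "\<forall>i. q (q i) = i"
        proof
          fix i
          consider "i \<in> {1..k} \<and> i < c" | "i = c" | "c < i \<and> i \<le> k" | "i = Suc k" | "i \<notin> {1..Suc k}"
            using c1 by force
          then show "q (q i) = i"
          proof cases
            case 1
            then have i1: "i \<in> {1..k}" by simp
            have l: "\<tau> i < c" using low 1 by simp
            have ti: "\<tau> i \<in> {1..k}" by (rule timg[OF i1])
            have a: "q i = \<tau> i" using qk[OF i1] uc l by simp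
            have b: "q (\<tau> i) = \<tau> (\<tau> i)" using qk[OF ti] uc tinv[of i] 1 by simp
            show ?thesis using a b tinv by simp
          next
            case 2
            have a: "q c = Suc k" using qk[of c] c1 tc uc by simp
            show ?thesis using a ql uc 2 by simp
          next
            case 3
            then have i1: "i \<in> {1..k}" using c1 by simp
            have m: "c \<le> \<tau> i" "\<tau> i < k" using mid 3 by auto
            have e1: "\<tau> i + i = c + k" using R 3 by simp
            have s': "c \<le> Suc (\<tau> i)" "Suc (\<tau> i) \<le> k" using m by auto
            have e2: "\<tau> (Suc (\<tau> i)) + Suc (\<tau> i) = c + k" by (rule R[OF s'(1) s'(2)])
            have a: "q i = Suc (\<tau> i)" using qk[OF i1] uc m by simp
            have si: "Suc (\<tau> i) \<in> {1..k}" using s' by simp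
            have cc: "c \<le> \<tau> (Suc (\<tau> i))" using e2 s' by arith
            have b: "q (Suc (\<tau> i)) = Suc (\<tau> (Suc (\<tau> i)))" using qk[OF si] uc cc by simp
            have "Suc (\<tau> (Suc (\<tau> i))) = i" using e1 e2 3 by arith
            then show ?thesis using a b by simp
          next
            case 4
            have a: "q c = Suc k" using qk[of c] c1 tc uc by simp
            show ?thesis using a ql uc 4 by simp
          next
            case 5 then show ?thesis using qout by simp
          qed
        qed
        with qni show ?thesis by blast
      next
        case False
        then have ck: "c = k" using c1 by simp
        have "\<not> c \<le> u" using uk1 ck k2 by arith
        then have "u' = u" using u'e by simp
        then show ?thesis using u'd ck u0_def by simp
      qed
    qed
    have uu: "u = u0" using U by simp
    have u'v: "u' = (if c < k then Suc k else d)" using U by simp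
    have xK: "x = Suc (Suc (Suc k))"
    proof (rule ccontr)
      assume nx: "x \<noteq> Suc (Suc (Suc k))"
      then have x2: "x \<in> {1..Suc (Suc k)}" using xr by auto
      have \<rho>x: "\<rho> x = Suc (Suc (Suc k))" using \<rho>inv[of "Suc (Suc (Suc k))"] x_def by simp
      have rxi: "r x \<in> {1..Suc (Suc k)}" by (rule rimg[OF x2])
      have "(if x \<le> r x then Suc (r x) else r x) = Suc (Suc (Suc k))" using \<rho>k[OF x2] \<rho>x by simp
      then have rx: "r x = Suc (Suc k)" using rxi by (auto split: if_splits)
      have xc: "x = c" using rinv[of x] rx rl wc by simp
      have K2: "Suc (Suc k) \<in> {1..Suc (Suc k)}" by simp
      have \<rho>K2: "\<rho> (Suc (Suc k)) = Suc c" using \<rho>k[OF K2] rl wc xc by simp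
      have \<rho>sc: "\<rho> (Suc c) = Suc (Suc k)" using \<rho>inv[of "Suc (Suc k)"] \<rho>K2 by simp
      have sc2: "Suc c \<in> {1..Suc (Suc k)}" using c1 by simp
      have rsci: "r (Suc c) \<in> {1..Suc (Suc k)}" by (rule rimg[OF sc2])
      have "(if c \<le> r (Suc c) then Suc (r (Suc c)) else r (Suc c)) = Suc (Suc k)" using \<rho>k[OF sc2] \<rho>sc xc by simp
      then have "r (Suc c) = Suc k" using rsci c1 by (auto split: if_splits)
      then have "Suc c = u'" using rinv[of "Suc c"] u'_def by simp
      then show False using u'v dk c1 k2 by (auto split: if_splits)
    qed
    have qq: "q = q0" using eq uu q0_def by simp
    have rr: "r = r0" using er qq wc r0_def by simp
    show "\<rho> = \<rho>0" using e\<rho> rr xK \<rho>0_def by simp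
  qed
  have e3: "k + 3 = Suc (Suc (Suc k))" "k + 2 = Suc (Suc k)" by simp_all
  show ?thesis unfolding e3
  proof (rule ex1I[of _ \<rho>0])
    show "\<rho>0 permutes {1..Suc (Suc (Suc k))} \<and> jset (Suc (Suc (Suc k))) \<rho>0 = {0..k} \<union> {Suc (Suc k), Suc (Suc (Suc k))}
        \<and> init_pattern \<rho>0 k = \<tau>" using p0p p0J p0patk by blast
  next
    fix \<rho> assume "\<rho> permutes {1..Suc (Suc (Suc k))} \<and> jset (Suc (Suc (Suc k))) \<rho> = {0..k} \<union> {Suc (Suc k), Suc (Suc (Suc k))}
        \<and> init_pattern \<rho> k = \<tau>"
    then show "\<rho> = \<rho>0" using uniq by blast
  qed
qed

end
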